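(* Let $a,d\in\mathbb N$ and let $\chi\in M(d)_\mathbb R$ be strictly dominant with $\chi\in\mathbf V^a(1,d)$. Then there exists a unique integer $0\le e\le d$ such that \[ \chi=\sum_{j<i\le e}c_{ij}(\beta_i-\beta_j)+\sum_{e<j<i}c_{ij}(\beta_i-\beta_j)+\sum_{j\le e<i}\tfrac32(\beta_i-\beta_j)+\sum_{1\le i\le d}c_i\beta_i \] for some real numbers with $0\le c_{ij}\le\frac32$ for $j<i$, $-\frac{a+2}{2}\le c_i\le-\frac a2$ for $i\le e$, and $-\frac a2<c_i\le\frac a2$ for $i>e$. Equivalently, with $f:=d-e$, \[ \chi\in\Big(-\tfrac{a+3f}{2}\sigma_e+\mathbf V(e)\Big)+\Big(\tfrac{3e}{2}\sigma_f+\mathbf W^a(1,f)\Big), \] where $M(e)\oplus M(f)$ is identified with $M(d)$ via the first $e$ and the last $f$ coordinates.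
   Context: $M(n)$ is the character lattice of the diagonal torus of $GL(n)$ with coordinate characters $\beta_1,\dots,\beta_n$; $\chi=\sum b_i\beta_i$ is strictly dominant if $b_1<\dots<b_n$. $\sigma_n=\sum_i\beta_i$. Minkowski sums below run over all $1\le i,j\le n$ and $1\le k\le n$: $\mathbf V(n):=\frac32\mathrm{sum}[0,\beta_i-\beta_j]+\mathrm{sum}[-\beta_k,0]$; $\mathbf W^a(1,n):=\frac32\mathrm{sum}[0,\beta_i-\beta_j]+\frac a2\mathrm{sum}(-\beta_k,\beta_k]$ (half-open segments); $\mathbf V^a(1,n):=\frac32\mathrm{sum}[0,\beta_i-\beta_j]+\frac a2\mathrm{sum}[-\beta_k,\beta_k]+\mathrm{sum}[-\beta_k,0]$. *)

theory Defs
  imports Main "HOL-Library.Set_Algebras" Complex_Main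
begin

text \<open>Elements of M(n)_R are represented as functions nat => real, of which only the
coordinates 1..n are relevant.  The coordinate character beta_i is the i-th unit vector.\<close>

definition beta :: "nat \<Rightarrow> nat \<Rightarrow> real" where
  "beta i = (\<lambda>k. if k = i then 1 else 0)"

definition strictly_dominant :: "nat \<Rightarrow> (nat \<Rightarrow> real) \<Rightarrow> bool" where
  "strictly_dominant n \<chi> \<longleftrightarrow> (\<forall>i j. 1 \<le> i \<longrightarrow> i < j \<longrightarrow> j \<le> n \<longrightarrow> \<chi> i < \<chi> j)"

definition eqM :: "nat \<Rightarrow> (nat \<Rightarrow> real) \<Rightarrow> (nat \<Rightarrow> real) \<Rightarrow> bool" where
  "eqM n x y \<longleftrightarrow> (\<forall>m\<in>{1..n}. x m = y m)"

text \<open>V^a(1,n) = 3/2 sum_{i,j} [0, beta_i - beta_j] + a/2 sum_k [-beta_k, beta_k] + sum_k [-beta_k, 0]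
  (Minkowski sums of segments, i,j,k ranging over 1..n), unfolded: a point of a Minkowski sum
  of segments [p,q] is a sum of points p + t (q - p) with t in [0,1].\<close>
definition V_a_1 :: "nat \<Rightarrow> nat \<Rightarrow> (nat \<Rightarrow> real) set" where
  "V_a_1 a n = {\<chi>. \<exists>t s u.
      (\<forall>i j. 0 \<le> t i j \<and> t i j \<le> 1) \<and>
      (\<forall>k. 0 \<le> s k \<and> s k \<le> 1) \<and>
      (\<forall>k. 0 \<le> u k \<and> u k \<le> 1) \<and>
      eqM n \<chi> (\<lambda>m.
          (\<Sum>i\<in>{1..n}. \<Sum>j\<in>{1..n}. t i j * (3/2 * (beta i m - beta j m)))
        + (\<Sum>k\<in>{1..n}. (- (real a / 2) * beta k m) + s k * (real a * beta k m))
        + (\<Sum>k\<in>{1..n}. (- beta k m) + u k * beta k m))}"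

end

theory Submission
  imports Defs
begin


lemma interp:
  fixes z :: "nat \<Rightarrow> real" and top bot :: "nat \<Rightarrow> bool" and p q v :: nat
  assumes topc: "\<And>i j. p < i \<Longrightarrow> i \<le> j \<Longrightarrow> j \<le> q \<Longrightarrow> top i \<Longrightarrow> top j"
   and botc: "\<And>i j. p < i \<Longrightarrow> i \<le> j \<Longrightarrow> j \<le> q \<Longrightarrow> bot j \<Longrightarrow> bot i"
   and mid: "\<And>j. p < j \<Longrightarrow> j \<le> q \<Longrightarrow> \<not> top j \<Longrightarrow> \<not> bot j \<Longrightarrow> z j = \<theta>"
   and h1: "\<And>v. p \<le> v \<Longrightarrow> v \<le> q \<Longrightarrow> (\<forall>j\<in>{v<..q}. top j) \<Longrightarrow>
          (\<Sum>j\<in>{v<..q}. z j) \<le> 3/2 * (real q - real v) * (real v - real p)"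
   and h2: "\<And>v. p \<le> v \<Longrightarrow> v \<le> q \<Longrightarrow> (\<forall>j\<in>{p<..v}. bot j) \<Longrightarrow>
          (\<Sum>j\<in>{v<..q}. z j) \<le> 3/2 * (real q - real v) * (real v - real p)"
   and v: "p \<le> v" "v \<le> q"
  shows "(\<Sum>j\<in>{v<..q}. z j) \<le> 3/2 * (real q - real v) * (real v - real p)"
proof (cases "(\<forall>j\<in>{v<..q}. top j) \<or> (\<forall>j\<in>{p<..v}. bot j)")
  case True
  then show ?thesis using h1 h2 v by blast
next
  case False
  hence nt: "\<not> (\<forall>j\<in>{v<..q}. top j)" and nb: "\<not> (\<forall>j\<in>{p<..v}. bot j)" by auto
  define A1 where "A1 = {w\<in>{v..q}. \<forall>j\<in>{w<..q}. top j}"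
  have qA1: "q \<in> A1" using v by (auto simp: A1_def)
  have fA1: "finite A1" by (auto simp: A1_def)
  define v1 where "v1 = Min A1"
  have v1A: "v1 \<in> A1" using qA1 fA1 unfolding v1_def by (intro Min_in) auto
  have v1le: "\<And>w. w \<in> A1 \<Longrightarrow> v1 \<le> w" using fA1 unfolding v1_def by simp
  have v1r: "v \<le> v1" "v1 \<le> q" and v1t: "\<forall>j\<in>{v1<..q}. top j" using v1A by (auto simp: A1_def)
  have vv1: "v < v1" using v1r v1t nt by (metis le_neq_implies_less)
  have ntv1: "\<not> top v1"
  proof
    assume tv: "top v1"
    have "v1 - 1 \<in> A1" using vv1 v1r v1t tv unfolding A1_def
    proof (simp, intro conjI ballI)
      show "v \<le> v1 - Suc 0" using vv1 by linarith
      show "v1 - Suc 0 \<le> q" using v1r by linarith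
      fix j assume "j \<in> {v1 - Suc 0<..q}"
      hence "j = v1 \<or> j \<in> {v1<..q}" by auto
      thus "top j" using tv v1t by auto
    qed
    hence "v1 \<le> v1 - 1" by (rule v1le)
    thus False using vv1 by linarith
  qed
  have ntj: "\<And>j. p < j \<Longrightarrow> j \<le> v1 \<Longrightarrow> \<not> top j" using topc ntv1 v1r by blast
  define A0 where "A0 = {w\<in>{p..v}. \<forall>j\<in>{p<..w}. bot j}"
  have pA0: "p \<in> A0" using v by (auto simp: A0_def)
  have fA0: "finite A0" by (auto simp: A0_def)
  define v0 where "v0 = Max A0"
  have v0A: "v0 \<in> A0" using pA0 fA0 unfolding v0_def by (intro Max_in) auto
  have v0ge: "\<And>w. w \<in> A0 \<Longrightarrow> w \<le> v0" using fA0 unfolding v0_def by simp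
  have v0r: "p \<le> v0" "v0 \<le> v" and v0b: "\<forall>j\<in>{p<..v0}. bot j" using v0A by (auto simp: A0_def)
  have v0v: "v0 < v" using v0r v0b nb by (metis le_neq_implies_less)
  have nbv0: "\<not> bot (Suc v0)"
  proof
    assume bv: "bot (Suc v0)"
    have "Suc v0 \<in> A0" using v0v v0r v0b bv unfolding A0_def
      by (auto simp: less_Suc_eq_le le_less)
    hence "Suc v0 \<le> v0" by (rule v0ge)
    thus False by simp
  qed
  have nbj: "\<And>j. v0 < j \<Longrightarrow> j \<le> q \<Longrightarrow> \<not> bot j"
  proof
    fix j assume "v0 < j" "j \<le> q" "bot j"
    hence "bot (Suc v0)" using botc[of "Suc v0" j] v0r by simp
    thus False using nbv0 by simp
  qed
  have zth: "\<And>j. j \<in> {v0<..v1} \<Longrightarrow> z j = \<theta>"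
  proof -
    fix j assume j: "j \<in> {v0<..v1}"
    hence "p < j" "j \<le> q" using v0r v1r by auto
    thus "z j = \<theta>" using mid ntj nbj j by auto
  qed
  have s1: "(\<Sum>j\<in>{v<..q}. z j) = (\<Sum>j\<in>{v1<..q}. z j) + (real v1 - real v) * \<theta>"
  proof -
    have "{v<..q} = {v<..v1} \<union> {v1<..q}" using vv1 v1r by auto
    hence "(\<Sum>j\<in>{v<..q}. z j) = (\<Sum>j\<in>{v<..v1}. z j) + (\<Sum>j\<in>{v1<..q}. z j)"
      by (simp add: sum.union_disjoint[symmetric] ivl_disj_int)
    also have "(\<Sum>j\<in>{v<..v1}. z j) = (\<Sum>j\<in>{v<..v1}. \<theta>)"
      using zth v0v by (intro sum.cong) auto
    finally show ?thesis using vv1 by (simp add: of_nat_diff)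
  qed
  have s0: "(\<Sum>j\<in>{v0<..q}. z j) = (\<Sum>j\<in>{v<..q}. z j) + (real v - real v0) * \<theta>"
  proof -
    have "{v0<..q} = {v0<..v} \<union> {v<..q}" using v0v v by auto
    hence "(\<Sum>j\<in>{v0<..q}. z j) = (\<Sum>j\<in>{v0<..v}. z j) + (\<Sum>j\<in>{v<..q}. z j)"
      by (simp add: sum.union_disjoint[symmetric] ivl_disj_int)
    also have "(\<Sum>j\<in>{v0<..v}. z j) = (\<Sum>j\<in>{v0<..v}. \<theta>)"
      using zth vv1 by (intro sum.cong) auto
    finally show ?thesis using v0v by (simp add: of_nat_diff)
  qed
  have b1: "(\<Sum>j\<in>{v1<..q}. z j) \<le> 3/2 * (real q - real v1) * (real v1 - real p)"
    using h1 v1r v1t v by simp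
  have b0: "(\<Sum>j\<in>{v0<..q}. z j) \<le> 3/2 * (real q - real v0) * (real v0 - real p)"
    using h2 v0r v0b v by simp
  have rv: "real v0 < real v" "real v < real v1" using v0v vv1 by auto
  show ?thesis
  proof (cases "\<theta> \<le> 3/2 * (real v1 + real v - real q - real p)")
    case True
    have "(real v1 - real v) * \<theta> \<le> (real v1 - real v) * (3/2 * (real v1 + real v - real q - real p))"
      using True rv by (intro mult_left_mono) auto
    moreover have "3/2 * (real q - real v1) * (real v1 - real p) + (real v1 - real v) * (3/2 * (real v1 + real v - real q - real p))
       = 3/2 * (real q - real v) * (real v - real p)" by (simp add: field_simps)
    ultimately show ?thesis using s1 b1 by linarith
  next
    case False
    have "(real v - real v0) * (3/2 * (real v + real v0 - real q - real p)) \<le> (real v - real v0) * \<theta>"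
      using False rv by (intro mult_left_mono) auto
    moreover have "3/2 * (real q - real v0) * (real v0 - real p) - (real v - real v0) * (3/2 * (real v + real v0 - real q - real p))
       = 3/2 * (real q - real v) * (real v - real p)" by (simp add: field_simps)
    ultimately show ?thesis using s0 b0 by linarith
  qed
qed



lemma sum_split_ivl:
  fixes f :: "nat \<Rightarrow> real"
  assumes "a \<le> b" "b \<le> c"
  shows "(\<Sum>j\<in>{a<..c}. f j) = (\<Sum>j\<in>{a<..b}. f j) + (\<Sum>j\<in>{b<..c}. f j)"
proof -
  have "{a<..c} = {a<..b} \<union> {b<..c}" using assms by auto
  thus ?thesis by (simp add: sum.union_disjoint[symmetric] ivl_disj_int)
qed

lemma sum_Suc_top:
  fixes f :: "nat \<Rightarrow> real"
  assumes "a \<le> b"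
  shows "(\<Sum>j\<in>{a<..Suc b}. f j) = (\<Sum>j\<in>{a<..b}. f j) + f (Suc b)"
proof -
  have "{a<..Suc b} = insert (Suc b) {a<..b}" using assms by auto
  thus ?thesis by simp
qed

lemma maj:
  fixes z :: "nat \<Rightarrow> real" and p q :: nat
  assumes "p \<le> q"
  and "\<And>i j. p < i \<Longrightarrow> i \<le> j \<Longrightarrow> j \<le> q \<Longrightarrow> z i \<le> z j"
  and "(\<Sum>j\<in>{p<..q}. z j) = 0"
  and "\<And>v. p \<le> v \<Longrightarrow> v \<le> q \<Longrightarrow> (\<Sum>j\<in>{v<..q}. z j) \<le> 3/2 * (real q - real v) * (real v - real p)"
  shows "\<exists>c. (\<forall>i j. 0 \<le> c i j \<and> c i j \<le> 3/2) \<and>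
     (\<forall>m\<in>{p<..q}. z m = (\<Sum>j\<in>{p<..<m}. c m j) - (\<Sum>i\<in>{m<..q}. c i m))"
  using assms
proof (induction q arbitrary: z)
  case 0
  thus ?case by (intro exI[of _ "\<lambda>_ _. 0"]) auto
next
  case (Suc q0)
  note mono = Suc.prems(2) and sum0 = Suc.prems(3) and win = Suc.prems(4)
  show ?case
  proof (cases "p = Suc q0")
    case True
    thus ?thesis by (intro exI[of _ "\<lambda>_ _. 0"]) auto
  next
    case False
    hence pq0: "p \<le> q0" using Suc.prems(1) by simp
    define q where "q = Suc q0"
    have zq0: "0 \<le> z q"
    proof -
      have "(\<Sum>j\<in>{p<..q}. z j) \<le> (\<Sum>j\<in>{p<..q}. z q)"
        using mono unfolding q_def by (intro sum_mono) auto
      hence "0 \<le> (real q - real p) * z q" using sum0 pq0 unfolding q_def by (simp add: of_nat_diff)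
      moreover have "real q - real p > 0" using pq0 unfolding q_def by simp
      ultimately show ?thesis by (simp add: zero_le_mult_iff)
    qed
    have zq1: "z q \<le> 3/2 * (real q0 - real p)"
    proof -
      have "{q0<..Suc q0} = {Suc q0}" by auto
      thus ?thesis using win[of q0] pq0 unfolding q_def by simp
    qed
    define W where "W = (\<lambda>\<theta>. \<Sum>j\<in>{p<..q0}. max 0 (min (3/2) (\<theta> - z j)))"
    have W1: "W (z (Suc p)) = 0" unfolding W_def
    proof (intro sum.neutral ballI)
      fix j assume "j \<in> {p<..q0}"
      hence "z (Suc p) \<le> z j" using mono[of "Suc p" j] by auto
      thus "max 0 (min (3/2) (z (Suc p) - z j)) = 0" by simp
    qed
    have W2: "W (z q + 3/2) = 3/2 * (real q0 - real p)"
    proof -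
      have "W (z q + 3/2) = (\<Sum>j\<in>{p<..q0}. 3/2)" unfolding W_def
      proof (intro sum.cong refl)
        fix j assume "j \<in> {p<..q0}"
        hence "z j \<le> z q" using mono[of j q] unfolding q_def by auto
        thus "max 0 (min (3/2) (z q + 3/2 - z j)) = 3/2" by simp
      qed
      thus ?thesis using pq0 by (simp add: of_nat_diff)
    qed
    have cont: "continuous_on {z (Suc p) .. z q + 3/2} W" unfolding W_def
      by (intro continuous_intros)
    have "z (Suc p) \<le> z q" using mono[of "Suc p" q] pq0 unfolding q_def by auto
    then obtain \<theta> where th: "W \<theta> = z q"
      using IVT'[of W "z (Suc p)" "z q" "z q + 3/2"] W1 W2 zq0 zq1 cont by auto
    define cl where "cl = (\<lambda>j. max 0 (min (3/2) (\<theta> - z j)))"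
    have cl01: "\<And>j. 0 \<le> cl j \<and> cl j \<le> 3/2" unfolding cl_def by (auto simp: max_def min_def)
    define z' where "z' = (\<lambda>j. z j + cl j)"
    have Wcl: "(\<Sum>j\<in>{p<..q0}. cl j) = z q" using th unfolding W_def cl_def by simp
    have mono': "\<And>i j. p < i \<Longrightarrow> i \<le> j \<Longrightarrow> j \<le> q0 \<Longrightarrow> z' i \<le> z' j"
    proof -
      fix i j assume "p < i" "i \<le> j" "j \<le> q0"
      hence "z i \<le> z j" using mono by simp
      thus "z' i \<le> z' j" unfolding z'_def cl_def by (auto simp: max_def min_def)
    qed
    have sumz: "(\<Sum>j\<in>{p<..q}. z j) = (\<Sum>j\<in>{p<..q0}. z j) + z q"
      unfolding q_def by (rule sum_Suc_top[OF pq0])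
    have sum0': "(\<Sum>j\<in>{p<..q0}. z' j) = 0"
      using sumz sum0 Wcl unfolding z'_def q_def by (simp add: sum.distrib)
    have win': "\<And>v. p \<le> v \<Longrightarrow> v \<le> q0 \<Longrightarrow> (\<Sum>j\<in>{v<..q0}. z' j) \<le> 3/2 * (real q0 - real v) * (real v - real p)"
    proof -
      fix v assume v: "p \<le> v" "v \<le> q0"
      show "(\<Sum>j\<in>{v<..q0}. z' j) \<le> 3/2 * (real q0 - real v) * (real v - real p)"
      proof (rule interp[where top = "\<lambda>j. \<theta> \<le> z j" and bot = "\<lambda>j. 3/2 \<le> \<theta> - z j" and \<theta> = \<theta>])
        show "\<And>i j. p < i \<Longrightarrow> i \<le> j \<Longrightarrow> j \<le> q0 \<Longrightarrow> \<theta> \<le> z i \<Longrightarrow> \<theta> \<le> z j"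
          using mono unfolding q_def by (meson le_SucI order_trans)
        show "\<And>i j. p < i \<Longrightarrow> i \<le> j \<Longrightarrow> j \<le> q0 \<Longrightarrow> 3/2 \<le> \<theta> - z j \<Longrightarrow> 3/2 \<le> \<theta> - z i"
        proof -
          fix i j assume "p < i" "i \<le> j" "j \<le> q0" "3/2 \<le> \<theta> - z j"
          moreover have "z i \<le> z j" using mono \<open>p < i\<close> \<open>i \<le> j\<close> \<open>j \<le> q0\<close> by simp
          ultimately show "3/2 \<le> \<theta> - z i" by linarith
        qed
        show "\<And>j. p < j \<Longrightarrow> j \<le> q0 \<Longrightarrow> \<not> \<theta> \<le> z j \<Longrightarrow> \<not> 3/2 \<le> \<theta> - z j \<Longrightarrow> z' j = \<theta>"
          unfolding z'_def cl_def by auto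
        show "p \<le> v" "v \<le> q0" by fact+
      next
        fix w assume w: "p \<le> w" "w \<le> q0" and tp: "\<forall>j\<in>{w<..q0}. \<theta> \<le> z j"
        have e1: "(\<Sum>j\<in>{w<..q0}. z' j) = (\<Sum>j\<in>{w<..q0}. z j)"
          unfolding z'_def cl_def
        proof (intro sum.cong refl)
          fix x assume "x \<in> {w<..q0}"
          hence "\<theta> \<le> z x" using tp by blast
          thus "z x + max 0 (min (3 / 2) (\<theta> - z x)) = z x" by simp
        qed
        have e2: "(\<Sum>j\<in>{w<..q}. z j) = (\<Sum>j\<in>{w<..q0}. z j) + z q"
          unfolding q_def by (rule sum_Suc_top[OF w(2)])
        have b: "(\<Sum>j\<in>{w<..q}. z j) \<le> 3/2 * (real q - real w) * (real w - real p)"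
          using win[of w] w unfolding q_def by simp
        have b2: "(\<Sum>j\<in>{w<..q0}. z j) \<le> (real q0 - real w) * z q"
        proof -
          have "(\<Sum>j\<in>{w<..q0}. z j) \<le> (\<Sum>j\<in>{w<..q0}. z q)"
            using mono w unfolding q_def by (intro sum_mono) auto
          thus ?thesis using w by (simp add: of_nat_diff)
        qed
        have rq: "real q = real q0 + 1" unfolding q_def by simp
        show "(\<Sum>j\<in>{w<..q0}. z' j) \<le> 3/2 * (real q0 - real w) * (real w - real p)"
        proof (cases "z q \<le> 3/2 * (real w - real p)")
          case True
          have "(real q0 - real w) * z q \<le> (real q0 - real w) * (3/2 * (real w - real p))"
            using True w by (intro mult_left_mono) auto
          thus ?thesis using e1 b2 by (simp add: algebra_simps)
        next
          case False
          have "3/2 * (real q - real w) * (real w - real p) = 3/2 * (real q0 - real w) * (real w - real p) + 3/2 * (real w - real p)"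
            unfolding rq by (simp add: field_simps)
          thus ?thesis using e1 e2 b False by linarith
        qed
      next
        fix w assume w: "p \<le> w" "w \<le> q0" and bt: "\<forall>j\<in>{p<..w}. 3/2 \<le> \<theta> - z j"
        have e1: "(\<Sum>j\<in>{p<..w}. z' j) = (\<Sum>j\<in>{p<..w}. z j) + 3/2 * (real w - real p)"
        proof -
          have "(\<Sum>j\<in>{p<..w}. z' j) = (\<Sum>j\<in>{p<..w}. z j + 3/2)"
            unfolding z'_def cl_def using bt by (intro sum.cong) auto
          thus ?thesis using w by (simp add: sum.distrib of_nat_diff)
        qed
        have e2: "(\<Sum>j\<in>{p<..q0}. z' j) = (\<Sum>j\<in>{p<..w}. z' j) + (\<Sum>j\<in>{w<..q0}. z' j)"
          by (rule sum_split_ivl) (use w in auto)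
        have e3: "(\<Sum>j\<in>{p<..q}. z j) = (\<Sum>j\<in>{p<..w}. z j) + (\<Sum>j\<in>{w<..q}. z j)"
          by (rule sum_split_ivl) (use w in \<open>auto simp: q_def\<close>)
        have b: "(\<Sum>j\<in>{w<..q}. z j) \<le> 3/2 * (real q - real w) * (real w - real p)"
          using win[of w] w unfolding q_def by simp
        have rq: "real q = real q0 + 1" unfolding q_def by simp
        have "3/2 * (real q - real w) * (real w - real p) = 3/2 * (real q0 - real w) * (real w - real p) + 3/2 * (real w - real p)"
          unfolding rq by (simp add: field_simps)
        thus "(\<Sum>j\<in>{w<..q0}. z' j) \<le> 3/2 * (real q0 - real w) * (real w - real p)"
          using e1 e2 e3 b sum0 sum0' unfolding q_def by linarith
      qed
    qed
    obtain c' where c'b: "\<forall>i j. 0 \<le> c' i j \<and> c' i j \<le> 3/2"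
      and c'r: "\<forall>m\<in>{p<..q0}. z' m = (\<Sum>j\<in>{p<..<m}. c' m j) - (\<Sum>i\<in>{m<..q0}. c' i m)"
      using Suc.IH[OF pq0 mono' sum0' win'] by blast
    define c where "c = (\<lambda>i j. if i = q then cl j else c' i j)"
    show ?thesis
    proof (intro exI[of _ c] conjI allI ballI)
      fix i j show "0 \<le> c i j" "c i j \<le> 3/2" unfolding c_def using cl01 c'b by auto
    next
      fix m assume m: "m \<in> {p<..Suc q0}"
      show "z m = (\<Sum>j\<in>{p<..<m}. c m j) - (\<Sum>i\<in>{m<..Suc q0}. c i m)"
      proof (cases "m = q")
        case True
        have "{m<..Suc q0} = {}" using True q_def by auto
        moreover have "{p<..<m} = {p<..q0}" using True q_def by auto
        moreover have "(\<Sum>j\<in>{p<..q0}. c m j) = (\<Sum>j\<in>{p<..q0}. cl j)"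
          using True unfolding c_def by simp
        ultimately show ?thesis using Wcl True by simp
      next
        case False
        hence mq0: "m \<in> {p<..q0}" using m q_def by auto
        have "(\<Sum>i\<in>{m<..Suc q0}. c i m) = (\<Sum>i\<in>{m<..q0}. c i m) + c (Suc q0) m"
          by (rule sum_Suc_top) (use mq0 in auto)
        also have "(\<Sum>i\<in>{m<..q0}. c i m) = (\<Sum>i\<in>{m<..q0}. c' i m)"
          unfolding c_def q_def by (intro sum.cong) auto
        also have "c (Suc q0) m = cl m" unfolding c_def q_def by simp
        finally have a1: "(\<Sum>i\<in>{m<..Suc q0}. c i m) = (\<Sum>i\<in>{m<..q0}. c' i m) + cl m" .
        have a2: "(\<Sum>j\<in>{p<..<m}. c m j) = (\<Sum>j\<in>{p<..<m}. c' m j)"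
          unfolding c_def using False by simp
        have "z' m = (\<Sum>j\<in>{p<..<m}. c' m j) - (\<Sum>i\<in>{m<..q0}. c' i m)" using c'r mq0 by blast
        thus ?thesis using a1 a2 unfolding z'_def by linarith
      qed
    qed
  qed
qed



lemma flat:
  fixes y :: "nat \<Rightarrow> real" and p q :: nat and L U :: real
  assumes pq: "p \<le> q"
  and mono: "\<And>i j. p < i \<Longrightarrow> i \<le> j \<Longrightarrow> j \<le> q \<Longrightarrow> y i \<le> y j"
  and top: "\<And>v. p \<le> v \<Longrightarrow> v \<le> q \<Longrightarrow> (\<Sum>j\<in>{v<..q}. y j) \<le> 3/2*(real q - real v)*(real v - real p) + (real q - real v)*U"
  and bot: "\<And>v. p \<le> v \<Longrightarrow> v \<le> q \<Longrightarrow> (\<Sum>j\<in>{p<..v}. y j) \<ge> -(3/2*(real v - real p)*(real q - real v)) + (real v - real p)*L"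
  shows "\<exists>c r. (\<forall>i j. 0 \<le> c i j \<and> c i j \<le> 3/2) \<and>
     (\<forall>m\<in>{p<..q}. L \<le> r m \<and> r m \<le> U \<and> y m = (\<Sum>j\<in>{p<..<m}. c m j) - (\<Sum>i\<in>{m<..q}. c i m) + r m)"
proof (cases "p = q")
  case True
  thus ?thesis by (intro exI[of _ "\<lambda>_ _. 0"] exI[of _ "\<lambda>_. L"]) auto
next
  case False
  hence pq': "p < q" using pq by simp
  have t0: "(\<Sum>j\<in>{p<..q}. y j) \<le> (real q - real p)*U" using top[of p] pq by simp
  have b0: "(\<Sum>j\<in>{p<..q}. y j) \<ge> (real q - real p)*L" using bot[of q] pq by simp
  have LU: "L \<le> U"
  proof (rule ccontr)
    assume "\<not> L \<le> U"
    hence "(real q - real p)*U < (real q - real p)*L" using pq' by (intro mult_strict_left_mono) auto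
    thus False using t0 b0 by linarith
  qed
  define R where "R = (\<lambda>\<theta>. \<Sum>m\<in>{p<..q}. max L (min U (y m - \<theta>)))"
  define ta where "ta = y (Suc p) - U"
  define tb where "tb = y q - L"
  have Ra: "R ta = (real q - real p) * U"
  proof -
    have "R ta = (\<Sum>m\<in>{p<..q}. U)" unfolding R_def
    proof (intro sum.cong refl)
      fix m assume "m \<in> {p<..q}"
      hence "y (Suc p) \<le> y m" using mono[of "Suc p" m] by auto
      thus "max L (min U (y m - ta)) = U" using LU unfolding ta_def by auto
    qed
    thus ?thesis using pq by (simp add: of_nat_diff)
  qed
  have Rb: "R tb = (real q - real p) * L"
  proof -
    have "R tb = (\<Sum>m\<in>{p<..q}. L)" unfolding R_def
    proof (intro sum.cong refl)
      fix m assume "m \<in> {p<..q}"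
      hence "y m \<le> y q" using mono[of m q] by auto
      thus "max L (min U (y m - tb)) = L" using LU unfolding tb_def by auto
    qed
    thus ?thesis using pq by (simp add: of_nat_diff)
  qed
  have tab: "ta \<le> tb" using mono[of "Suc p" q] pq' LU unfolding ta_def tb_def by auto
  have cont: "continuous_on {ta..tb} R" unfolding R_def by (intro continuous_intros)
  obtain \<theta> where th: "R \<theta> = (\<Sum>j\<in>{p<..q}. y j)"
    using IVT2'[where f=R and a=ta and b=tb and y="\<Sum>j\<in>{p<..q}. y j"] Ra Rb t0 b0 tab cont by auto
  define r where "r = (\<lambda>m. max L (min U (y m - \<theta>)))"
  define z where "z = (\<lambda>m. y m - r m)"
  have rLU: "\<And>m. L \<le> r m \<and> r m \<le> U" unfolding r_def using LU by (auto simp: max_def min_def)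
  have monoz: "\<And>i j. p < i \<Longrightarrow> i \<le> j \<Longrightarrow> j \<le> q \<Longrightarrow> z i \<le> z j"
  proof -
    fix i j assume "p < i" "i \<le> j" "j \<le> q"
    hence "y i \<le> y j" using mono by simp
    thus "z i \<le> z j" unfolding z_def r_def by (auto simp: max_def min_def)
  qed
  have sum0: "(\<Sum>j\<in>{p<..q}. z j) = 0"
    using th unfolding z_def r_def R_def by (simp add: sum_subtractf)
  have win: "\<And>v. p \<le> v \<Longrightarrow> v \<le> q \<Longrightarrow> (\<Sum>j\<in>{v<..q}. z j) \<le> 3/2 * (real q - real v) * (real v - real p)"
  proof -
    fix v assume v: "p \<le> v" "v \<le> q"
    show "(\<Sum>j\<in>{v<..q}. z j) \<le> 3/2 * (real q - real v) * (real v - real p)"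
    proof (rule interp[where top = "\<lambda>j. U \<le> y j - \<theta>" and bot = "\<lambda>j. y j - \<theta> \<le> L" and \<theta> = \<theta>])
      show "\<And>i j. p < i \<Longrightarrow> i \<le> j \<Longrightarrow> j \<le> q \<Longrightarrow> U \<le> y i - \<theta> \<Longrightarrow> U \<le> y j - \<theta>"
      proof -
        fix i j assume "p < i" "i \<le> j" "j \<le> q" "U \<le> y i - \<theta>"
        moreover have "y i \<le> y j" using mono \<open>p < i\<close> \<open>i \<le> j\<close> \<open>j \<le> q\<close> by simp
        ultimately show "U \<le> y j - \<theta>" by linarith
      qed
      show "\<And>i j. p < i \<Longrightarrow> i \<le> j \<Longrightarrow> j \<le> q \<Longrightarrow> y j - \<theta> \<le> L \<Longrightarrow> y i - \<theta> \<le> L"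
      proof -
        fix i j assume "p < i" "i \<le> j" "j \<le> q" "y j - \<theta> \<le> L"
        moreover have "y i \<le> y j" using mono \<open>p < i\<close> \<open>i \<le> j\<close> \<open>j \<le> q\<close> by simp
        ultimately show "y i - \<theta> \<le> L" by linarith
      qed
      show "\<And>j. p < j \<Longrightarrow> j \<le> q \<Longrightarrow> \<not> U \<le> y j - \<theta> \<Longrightarrow> \<not> y j - \<theta> \<le> L \<Longrightarrow> z j = \<theta>"
        unfolding z_def r_def by auto
      show "p \<le> v" "v \<le> q" by fact+
    next
      fix w assume w: "p \<le> w" "w \<le> q" and tp: "\<forall>j\<in>{w<..q}. U \<le> y j - \<theta>"
      have "(\<Sum>j\<in>{w<..q}. z j) = (\<Sum>j\<in>{w<..q}. y j - U)"
      proof (intro sum.cong refl)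
        fix x assume "x \<in> {w<..q}"
        hence "U \<le> y x - \<theta>" using tp by blast
        thus "z x = y x - U" unfolding z_def r_def using LU by simp
      qed
      also have "\<dots> = (\<Sum>j\<in>{w<..q}. y j) - (real q - real w) * U"
        using w by (simp add: sum_subtractf of_nat_diff)
      finally show "(\<Sum>j\<in>{w<..q}. z j) \<le> 3/2 * (real q - real w) * (real w - real p)"
        using top[OF w] by linarith
    next
      fix w assume w: "p \<le> w" "w \<le> q" and bt: "\<forall>j\<in>{p<..w}. y j - \<theta> \<le> L"
      have "(\<Sum>j\<in>{p<..w}. z j) = (\<Sum>j\<in>{p<..w}. y j - L)"
      proof (intro sum.cong refl)
        fix x assume "x \<in> {p<..w}"
        hence "y x - \<theta> \<le> L" using bt by blast
        thus "z x = y x - L" unfolding z_def r_def using LU by simp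
      qed
      also have "\<dots> = (\<Sum>j\<in>{p<..w}. y j) - (real w - real p) * L"
        using w by (simp add: sum_subtractf of_nat_diff)
      finally have e1: "(\<Sum>j\<in>{p<..w}. z j) = (\<Sum>j\<in>{p<..w}. y j) - (real w - real p) * L" .
      have e2: "(\<Sum>j\<in>{p<..q}. z j) = (\<Sum>j\<in>{p<..w}. z j) + (\<Sum>j\<in>{w<..q}. z j)"
        by (rule sum_split_ivl) (use w in auto)
      have "3/2 * (real w - real p) * (real q - real w) = 3/2 * (real q - real w) * (real w - real p)"
        by (simp add: algebra_simps)
      thus "(\<Sum>j\<in>{w<..q}. z j) \<le> 3/2 * (real q - real w) * (real w - real p)"
        using e1 e2 sum0 bot[OF w] by linarith
    qed
  qed
  obtain c where cb: "\<forall>i j. 0 \<le> c i j \<and> c i j \<le> 3/2"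
    and cr: "\<forall>m\<in>{p<..q}. z m = (\<Sum>j\<in>{p<..<m}. c m j) - (\<Sum>i\<in>{m<..q}. c i m)"
    using maj[OF pq monoz sum0 win] by blast
  show ?thesis
  proof (intro exI[of _ c] exI[of _ r] conjI allI ballI)
    fix i j show "0 \<le> c i j" "c i j \<le> 3/2" using cb by auto
  next
    fix m assume m: "m \<in> {p<..q}"
    show "L \<le> r m" "r m \<le> U" using rLU by auto
    show "y m = (\<Sum>j\<in>{p<..<m}. c m j) - (\<Sum>i\<in>{m<..q}. c i m) + r m"
      using cr m unfolding z_def by force
  qed
qed



lemma beta_app: "beta i m = (if m = i then 1 else 0)" by (simp add: beta_def)

lemma bdiff: "(c::real) * (beta i m - beta j m) = (if m = i then c else 0) - (if m = j then c else 0)"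
  by (simp add: beta_app)

lemma blockconv:
  fixes c :: "nat \<Rightarrow> nat \<Rightarrow> real"
  shows "(\<Sum>i\<in>{p<..q}. \<Sum>j\<in>{p<..<i}. c i j * (beta i m - beta j m)) =
    (if m \<in> {p<..q} then (\<Sum>j\<in>{p<..<m}. c m j) - (\<Sum>i\<in>{m<..q}. c i m) else 0)"
proof -
  have "(\<Sum>i\<in>{p<..q}. \<Sum>j\<in>{p<..<i}. c i j * (beta i m - beta j m)) =
     (\<Sum>i\<in>{p<..q}. \<Sum>j\<in>{p<..<i}. (if m = i then c i j else 0)) - (\<Sum>i\<in>{p<..q}. \<Sum>j\<in>{p<..<i}. (if m = j then c i j else 0))"
    by (simp only: bdiff sum_subtractf)
  also have "(\<Sum>i\<in>{p<..q}. \<Sum>j\<in>{p<..<i}. (if m = i then c i j else 0)) = (if m \<in> {p<..q} then (\<Sum>j\<in>{p<..<m}. c m j) else 0)"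
  proof -
    have "(\<Sum>i\<in>{p<..q}. \<Sum>j\<in>{p<..<i}. (if m = i then c i j else 0)) = (\<Sum>i\<in>{p<..q}. if m = i then (\<Sum>j\<in>{p<..<i}. c i j) else 0)"
      by (intro sum.cong) auto
    also have "\<dots> = (if m \<in> {p<..q} then (\<Sum>j\<in>{p<..<m}. c m j) else 0)"
      by (simp add: sum.delta)
    finally show ?thesis .
  qed
  also have "(\<Sum>i\<in>{p<..q}. \<Sum>j\<in>{p<..<i}. (if m = j then c i j else 0)) = (\<Sum>i\<in>{p<..q}. if p < m \<and> m < i then c i m else 0)"
    by (intro sum.cong refl) (simp add: sum.delta)
  also have "\<dots> = (if m \<in> {p<..q} then (\<Sum>i\<in>{m<..q}. c i m) else 0)"
  proof (cases "m \<in> {p<..q}")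
    case True
    have "(\<Sum>i\<in>{p<..q}. if p < m \<and> m < i then c i m else 0) = (\<Sum>i\<in>{i\<in>{p<..q}. p < m \<and> m < i}. c i m)"
      by (rule sum.inter_filter[symmetric]) simp
    also have "{i\<in>{p<..q}. p < m \<and> m < i} = {m<..q}" using True by auto
    finally show ?thesis using True by simp
  next
    case False
    have "(\<Sum>i\<in>{p<..q}. if p < m \<and> m < i then c i m else 0) = 0"
      using False by (intro sum.neutral) auto
    moreover have "(if m \<in> {p<..q} then (\<Sum>i\<in>{m<..q}. c i m) else 0) = 0" using False by (rule if_not_P)
    ultimately show ?thesis by linarith
  qed
  finally show ?thesis by simp
qed

lemma crossconv:
  fixes e d m :: nat
  assumes "e \<le> d" "m \<in> {1..d}"
  shows "(\<Sum>i\<in>{e<..d}. \<Sum>j\<in>{1..e}. 3/2 * (beta i m - beta j m)) =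
     (if m \<le> e then - (3/2 * (real d - real e)) else 3/2 * real e)"
proof -
  have "(\<Sum>i\<in>{e<..d}. \<Sum>j\<in>{1..e}. 3/2 * (beta i m - beta j m)) =
      (\<Sum>i\<in>{e<..d}. \<Sum>j\<in>{1..e}. (if m = i then 3/2 else 0)) - (\<Sum>i\<in>{e<..d}. \<Sum>j\<in>{1..e}. (if m = j then 3/2 else 0))"
    by (simp only: bdiff sum_subtractf)
  also have "(\<Sum>i\<in>{e<..d}. \<Sum>j\<in>{1..e}. (if m = i then 3/2 else 0)) = (\<Sum>i\<in>{e<..d}. (if m = i then 3/2 * real e else 0))"
    by (intro sum.cong refl) simp
  also have "\<dots> = (if m \<le> e then 0 else 3/2 * real e)"
    using assms by (simp add: sum.delta)
  also have "(\<Sum>i\<in>{e<..d}. \<Sum>j\<in>{1..e}. (if m = j then (3/2::real) else 0)) = (\<Sum>i\<in>{e<..d}. (if m \<le> e then 3/2 else 0))"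
    using assms by (intro sum.cong refl) (simp add: sum.delta)
  also have "\<dots> = (if m \<le> e then 3/2 * (real d - real e) else 0)"
    using assms by (simp add: of_nat_diff)
  finally show ?thesis by simp
qed

lemma vpoint:
  fixes t :: "nat \<Rightarrow> nat \<Rightarrow> real" and s u :: "nat \<Rightarrow> real"
  assumes "m \<in> {1..n}"
  shows "(\<Sum>i\<in>{1..n}. \<Sum>j\<in>{1..n}. t i j * (3/2 * (beta i m - beta j m)))
        + (\<Sum>k\<in>{1..n}. (- (real a / 2) * beta k m) + s k * (real a * beta k m))
        + (\<Sum>k\<in>{1..n}. (- beta k m) + u k * beta k m)
      = 3/2 * ((\<Sum>j\<in>{1..n}. t m j) - (\<Sum>i\<in>{1..n}. t i m)) + (s m * real a - real a / 2) + (u m - 1)"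
proof -
  have 0: "(\<Sum>i\<in>{1..n}. \<Sum>j\<in>{1..n}. t i j * (3/2 * (beta i m - beta j m))) =
    (\<Sum>i\<in>{1..n}. \<Sum>j\<in>{1..n}. (3/2 * t i j) * (beta i m - beta j m))"
    by (intro sum.cong refl) simp
  have 1: "(\<Sum>i\<in>{1..n}. \<Sum>j\<in>{1..n}. (3/2 * t i j) * (beta i m - beta j m)) =
    (\<Sum>i\<in>{1..n}. \<Sum>j\<in>{1..n}. (if m = i then 3/2 * t i j else 0)) - (\<Sum>i\<in>{1..n}. \<Sum>j\<in>{1..n}. (if m = j then 3/2 * t i j else 0))"
    by (simp only: bdiff sum_subtractf)
  have 2: "(\<Sum>i\<in>{1..n}. \<Sum>j\<in>{1..n}. (if m = i then 3/2 * t i j else 0)) = 3/2 * (\<Sum>j\<in>{1..n}. t m j)"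
  proof -
    have "(\<Sum>i\<in>{1..n}. \<Sum>j\<in>{1..n}. (if m = i then 3/2 * t i j else 0)) = (\<Sum>i\<in>{1..n}. if m = i then (\<Sum>j\<in>{1..n}. 3/2 * t i j) else 0)"
      by (intro sum.cong) auto
    thus ?thesis using assms by (simp add: sum.delta sum_distrib_left)
  qed
  have 3: "(\<Sum>i\<in>{1..n}. \<Sum>j\<in>{1..n}. (if m = j then 3/2 * t i j else 0)) = 3/2 * (\<Sum>i\<in>{1..n}. t i m)"
    using assms by (simp add: sum.delta sum_distrib_left)
  have 4: "(\<Sum>k\<in>{1..n}. (- (real a / 2) * beta k m) + s k * (real a * beta k m)) = (\<Sum>k\<in>{1..n}. if m = k then s k * real a - real a / 2 else 0)"
    by (intro sum.cong refl) (simp add: beta_app)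
  have 5: "(\<Sum>k\<in>{1..n}. (- beta k m) + u k * beta k m) = (\<Sum>k\<in>{1..n}. if m = k then u k - 1 else 0)"
    by (intro sum.cong refl) (simp add: beta_app)
  show ?thesis using 0 1 2 3 4 5 assms by (simp add: sum.delta algebra_simps)
qed



lemma net_sum:
  fixes T :: "nat \<Rightarrow> nat \<Rightarrow> real"
  assumes "finite D" "S \<subseteq> D"
  shows "(\<Sum>m\<in>S. (\<Sum>j\<in>D. T m j) - (\<Sum>i\<in>D. T i m)) =
     (\<Sum>m\<in>S. \<Sum>j\<in>D - S. T m j) - (\<Sum>m\<in>S. \<Sum>i\<in>D - S. T i m)"
proof -
  have fS: "finite S" using assms finite_subset by blast
  have a: "\<And>m. (\<Sum>j\<in>D. T m j) = (\<Sum>j\<in>D - S. T m j) + (\<Sum>j\<in>S. T m j)"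
    using sum.subset_diff[OF assms(2) assms(1)] by simp
  have b: "\<And>m. (\<Sum>i\<in>D. T i m) = (\<Sum>i\<in>D - S. T i m) + (\<Sum>i\<in>S. T i m)"
    using sum.subset_diff[OF assms(2) assms(1)] by simp
  have c: "(\<Sum>m\<in>S. \<Sum>j\<in>S. T m j) = (\<Sum>m\<in>S. \<Sum>i\<in>S. T i m)"
    by (rule sum.swap)
  show ?thesis using c by (simp add: a b sum_subtractf sum.distrib)
qed

lemma vsum:
  assumes V: "\<chi> \<in> V_a_1 a d" and S: "S \<subseteq> {1..d}"
  shows "(\<Sum>m\<in>S. \<chi> m) \<le> 3/2 * real (card S) * real (card ({1..d} - S)) + real (card S) * (real a / 2)"
    and "(\<Sum>m\<in>S. \<chi> m) \<ge> - (3/2 * real (card S) * real (card ({1..d} - S))) - real (card S) * (real a / 2 + 1)"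
proof -
  obtain t s u where tb: "\<forall>i j. 0 \<le> t i j \<and> t i j \<le> 1" and sb: "\<forall>k. 0 \<le> s k \<and> s k \<le> 1"
    and ub: "\<forall>k. 0 \<le> u k \<and> u k \<le> 1"
    and eq: "eqM d \<chi> (\<lambda>m.
          (\<Sum>i\<in>{1..d}. \<Sum>j\<in>{1..d}. t i j * (3/2 * (beta i m - beta j m)))
        + (\<Sum>k\<in>{1..d}. (- (real a / 2) * beta k m) + s k * (real a * beta k m))
        + (\<Sum>k\<in>{1..d}. (- beta k m) + u k * beta k m))"
    using V unfolding V_a_1_def by blast
  define D where "D = {1..d}"
  have pt: "\<And>m. m \<in> S \<Longrightarrow> \<chi> m = 3/2 * ((\<Sum>j\<in>D. t m j) - (\<Sum>i\<in>D. t i m)) + ((s m * real a - real a / 2) + (u m - 1))"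
  proof -
    fix m assume "m \<in> S"
    hence m: "m \<in> {1..d}" using S by auto
    show "\<chi> m = 3/2 * ((\<Sum>j\<in>D. t m j) - (\<Sum>i\<in>D. t i m)) + ((s m * real a - real a / 2) + (u m - 1))"
      using eq m vpoint[OF m, of t a s u] unfolding eqM_def D_def by simp
  qed
  have fD: "finite D" unfolding D_def by simp
  have SD: "S \<subseteq> D" using S unfolding D_def by simp
  have fS: "finite S" using fD SD finite_subset by blast
  have sumchi: "(\<Sum>m\<in>S. \<chi> m) = 3/2 * ((\<Sum>m\<in>S. \<Sum>j\<in>D - S. t m j) - (\<Sum>m\<in>S. \<Sum>i\<in>D - S. t i m))
        + (\<Sum>m\<in>S. (s m * real a - real a / 2) + (u m - 1))"
  proof -
    have "(\<Sum>m\<in>S. \<chi> m) = (\<Sum>m\<in>S. 3/2 * ((\<Sum>j\<in>D. t m j) - (\<Sum>i\<in>D. t i m)) + ((s m * real a - real a / 2) + (u m - 1)))"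
      using pt by (intro sum.cong) auto
    also have "\<dots> = 3/2 * (\<Sum>m\<in>S. (\<Sum>j\<in>D. t m j) - (\<Sum>i\<in>D. t i m)) + (\<Sum>m\<in>S. (s m * real a - real a / 2) + (u m - 1))"
      by (simp add: sum.distrib sum_distrib_left)
    finally show ?thesis using net_sum[OF fD SD, of t] by simp
  qed
  define k where "k = real (card S)"
  define l where "l = real (card (D - S))"
  have A1: "(\<Sum>m\<in>S. \<Sum>j\<in>D - S. t m j) \<le> k * l"
  proof -
    have "(\<Sum>m\<in>S. \<Sum>j\<in>D - S. t m j) \<le> of_nat (card S) * (of_nat (card (D - S)) * 1)"
      by (intro sum_bounded_above) (use tb in \<open>auto intro: sum_bounded_above\<close>)
    thus ?thesis unfolding k_def l_def by simp
  qed
  have A0: "0 \<le> (\<Sum>m\<in>S. \<Sum>j\<in>D - S. t m j)" using tb by (intro sum_nonneg) auto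
  have B1: "(\<Sum>m\<in>S. \<Sum>i\<in>D - S. t i m) \<le> k * l"
  proof -
    have "(\<Sum>m\<in>S. \<Sum>i\<in>D - S. t i m) \<le> of_nat (card S) * (of_nat (card (D - S)) * 1)"
      by (intro sum_bounded_above) (use tb in \<open>auto intro: sum_bounded_above\<close>)
    thus ?thesis unfolding k_def l_def by simp
  qed
  have B0: "0 \<le> (\<Sum>m\<in>S. \<Sum>i\<in>D - S. t i m)" using tb by (intro sum_nonneg) auto
  have C1: "(\<Sum>m\<in>S. (s m * real a - real a / 2) + (u m - 1)) \<le> k * (real a / 2)"
  proof -
    have "(\<Sum>m\<in>S. (s m * real a - real a / 2) + (u m - 1)) \<le> of_nat (card S) * (real a / 2)"
    proof (intro sum_bounded_above)
      fix m
      have "s m * real a \<le> 1 * real a" using sb by (intro mult_right_mono) auto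
      moreover have "u m \<le> 1" using ub by simp
      ultimately show "(s m * real a - real a / 2) + (u m - 1) \<le> real a / 2" by linarith
    qed
    thus ?thesis unfolding k_def by simp
  qed
  have C0: "k * (- (real a / 2 + 1)) \<le> (\<Sum>m\<in>S. (s m * real a - real a / 2) + (u m - 1))"
  proof -
    have "of_nat (card S) * (- (real a / 2 + 1)) \<le> (\<Sum>m\<in>S. (s m * real a - real a / 2) + (u m - 1))"
    proof (intro sum_bounded_below)
      fix m
      have "0 \<le> s m * real a" using sb by simp
      thus "- (real a / 2 + 1) \<le> (s m * real a - real a / 2) + (u m - 1)" using ub by auto
    qed
    thus ?thesis unfolding k_def by simp
  qed
  show "(\<Sum>m\<in>S. \<chi> m) \<le> 3/2 * real (card S) * real (card ({1..d} - S)) + real (card S) * (real a / 2)"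
  proof -
    have "3/2 * ((\<Sum>m\<in>S. \<Sum>j\<in>D - S. t m j) - (\<Sum>m\<in>S. \<Sum>i\<in>D - S. t i m)) \<le> 3/2 * (k * l)"
      using A1 B0 by simp
    moreover have "3/2 * k * l = 3/2 * (k * l)" by simp
    ultimately show ?thesis using sumchi C1 unfolding k_def l_def D_def by linarith
  qed
  show "(\<Sum>m\<in>S. \<chi> m) \<ge> - (3/2 * real (card S) * real (card ({1..d} - S))) - real (card S) * (real a / 2 + 1)"
  proof -
    have "3/2 * ((\<Sum>m\<in>S. \<Sum>j\<in>D - S. t m j) - (\<Sum>m\<in>S. \<Sum>i\<in>D - S. t i m)) \<ge> - (3/2 * (k * l))"
      using A0 B1 by simp
    moreover have "3/2 * k * l = 3/2 * (k * l)" by simp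
    moreover have "k * (- (real a / 2 + 1)) = - (k * (real a / 2 + 1))" by (simp only: mult_minus_right)
    ultimately show ?thesis using sumchi C0 unfolding k_def l_def D_def by linarith
  qed
qed

lemma vtop:
  assumes "\<chi> \<in> V_a_1 a d" "v \<le> d"
  shows "(\<Sum>m\<in>{v<..d}. \<chi> m) \<le> 3/2 * (real d - real v) * real v + (real d - real v) * (real a / 2)"
proof -
  have "{v<..d} \<subseteq> {1..d}" by auto
  moreover have "{1..d} - {v<..d} = {1..v}" using assms by auto
  ultimately show ?thesis using vsum(1)[OF assms(1), of "{v<..d}"] assms by (simp add: of_nat_diff)
qed

lemma vbot:
  assumes "\<chi> \<in> V_a_1 a d" "v \<le> d"
  shows "(\<Sum>m\<in>{0<..v}. \<chi> m) \<ge> - (3/2 * real v * (real d - real v)) - real v * (real a / 2 + 1)"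
proof -
  have e: "{0<..v} = {1..v}" by auto
  have "{1..v} \<subseteq> {1..d}" using assms by auto
  moreover have "{1..d} - {1..v} = {v<..d}" using assms by auto
  ultimately show ?thesis using vsum(2)[OF assms(1), of "{1..v}"] assms e by (simp add: of_nat_diff)
qed

lemma tri_swap:
  fixes f :: "nat \<Rightarrow> nat \<Rightarrow> real"
  shows "(\<Sum>m\<in>{v<..w}. \<Sum>j\<in>{v<..<m}. f m j) = (\<Sum>j\<in>{v<..w}. \<Sum>m\<in>{j<..w}. f m j)"
proof -
  have "(\<Sum>m\<in>{v<..w}. \<Sum>j\<in>{v<..<m}. f m j) = (\<Sum>m\<in>{v<..w}. \<Sum>j\<in>{v<..w}. if j < m then f m j else 0)"
  proof (rule sum.cong[OF refl])
    fix m assume "m \<in> {v<..w}"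
    hence e: "{v<..<m} = {j\<in>{v<..w}. j < m}" by auto
    have "(\<Sum>j\<in>{j\<in>{v<..w}. j < m}. f m j) = (\<Sum>j\<in>{v<..w}. if j < m then f m j else 0)"
      by (rule sum.inter_filter) simp
    thus "(\<Sum>j\<in>{v<..<m}. f m j) = (\<Sum>j\<in>{v<..w}. if j < m then f m j else 0)"
      using e by simp
  qed
  also have "\<dots> = (\<Sum>j\<in>{v<..w}. \<Sum>m\<in>{v<..w}. if j < m then f m j else 0)"
    by (rule sum.swap)
  also have "\<dots> = (\<Sum>j\<in>{v<..w}. \<Sum>m\<in>{j<..w}. f m j)"
  proof (rule sum.cong[OF refl])
    fix j assume "j \<in> {v<..w}"
    hence e: "{j<..w} = {m\<in>{v<..w}. j < m}" by auto
    have "(\<Sum>m\<in>{m\<in>{v<..w}. j < m}. f m j) = (\<Sum>m\<in>{v<..w}. if j < m then f m j else 0)"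
      by (rule sum.inter_filter) simp
    thus "(\<Sum>m\<in>{v<..w}. if j < m then f m j else 0) = (\<Sum>m\<in>{j<..w}. f m j)"
      using e by simp
  qed
  finally show ?thesis .
qed



lemma flat_strict:
  fixes y :: "nat \<Rightarrow> real" and p q :: nat and L U :: real
  assumes pq: "p \<le> q"
  and mono: "\<And>i j. p < i \<Longrightarrow> i \<le> j \<Longrightarrow> j \<le> q \<Longrightarrow> y i \<le> y j"
  and top: "\<And>v. p \<le> v \<Longrightarrow> v \<le> q \<Longrightarrow> (\<Sum>j\<in>{v<..q}. y j) \<le> 3/2*(real q - real v)*(real v - real p) + (real q - real v)*U"
  and bot: "\<And>v. p < v \<Longrightarrow> v \<le> q \<Longrightarrow> (\<Sum>j\<in>{p<..v}. y j) > -(3/2*(real v - real p)*(real q - real v)) + (real v - real p)*L"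
  shows "\<exists>c r. (\<forall>i j. 0 \<le> c i j \<and> c i j \<le> 3/2) \<and>
     (\<forall>m\<in>{p<..q}. L < r m \<and> r m \<le> U \<and> y m = (\<Sum>j\<in>{p<..<m}. c m j) - (\<Sum>i\<in>{m<..q}. c i m) + r m)"
proof (cases "p = q")
  case True
  thus ?thesis by (intro exI[of _ "\<lambda>_ _. 0"] exI[of _ "\<lambda>_. L"]) auto
next
  case False
  hence pq': "p < q" using pq by simp
  define G where "G = (\<lambda>v. ((\<Sum>j\<in>{p<..v}. y j) - (-(3/2*(real v - real p)*(real q - real v)) + (real v - real p)*L)) / (real v - real p))"
  define \<epsilon> where "\<epsilon> = Min (G ` {p<..q})"
  have Gpos: "\<And>v. v \<in> {p<..q} \<Longrightarrow> 0 < G v"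
    unfolding G_def using bot by (intro divide_pos_pos) auto
  have epos: "0 < \<epsilon>" unfolding \<epsilon>_def using Gpos pq' by (subst Min_gr_iff) auto
  have ele: "\<And>v. v \<in> {p<..q} \<Longrightarrow> \<epsilon> \<le> G v" unfolding \<epsilon>_def by simp
  have bot': "\<And>v. p \<le> v \<Longrightarrow> v \<le> q \<Longrightarrow> (\<Sum>j\<in>{p<..v}. y j) \<ge> -(3/2*(real v - real p)*(real q - real v)) + (real v - real p)*(L + \<epsilon>)"
  proof -
    fix v assume v: "p \<le> v" "v \<le> q"
    show "(\<Sum>j\<in>{p<..v}. y j) \<ge> -(3/2*(real v - real p)*(real q - real v)) + (real v - real p)*(L + \<epsilon>)"
    proof (cases "v = p")
      case True thus ?thesis by simp
    next
      case False
      hence vp: "v \<in> {p<..q}" "0 < real v - real p" using v by auto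
      have "\<epsilon> \<le> G v" using ele vp by simp
      hence "\<epsilon> * (real v - real p) \<le> (\<Sum>j\<in>{p<..v}. y j) - (-(3/2*(real v - real p)*(real q - real v)) + (real v - real p)*L)"
        unfolding G_def using vp by (simp add: pos_le_divide_eq)
      thus ?thesis by (simp add: algebra_simps)
    qed
  qed
  obtain c r where cb: "\<forall>i j. 0 \<le> c i j \<and> c i j \<le> 3/2" and
    cr: "\<forall>m\<in>{p<..q}. L + \<epsilon> \<le> r m \<and> r m \<le> U \<and> y m = (\<Sum>j\<in>{p<..<m}. c m j) - (\<Sum>i\<in>{m<..q}. c i m) + r m"
    using flat[OF pq mono top bot'] by blast
  show ?thesis
    by (intro exI[of _ c] exI[of _ r]) (use cb cr epos in force)
qed

definition psi :: "nat \<Rightarrow> nat \<Rightarrow> nat \<Rightarrow> real" where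
  "psi a d w = real w * (3/2 * real w - 3/2 * real d - real a / 2)"

lemma psi_diff: "psi a d w - psi a d v = (real w - real v) * (3/2 * (real w + real v) - 3/2 * real d - real a / 2)"
  unfolding psi_def by (simp add: field_simps)

lemma sum_const_ivl: "v \<le> w \<Longrightarrow> (\<Sum>m\<in>{v<..w}. (K::real)) = (real w - real v) * K"
  by (simp add: of_nat_diff)

lemma rhs_point:
  fixes c :: "nat \<Rightarrow> nat \<Rightarrow> real" and ci :: "nat \<Rightarrow> real"
  assumes ed: "e \<le> d" and m: "m \<in> {1..d}"
  shows "(\<Sum>i\<in>{1..e}. \<Sum>j\<in>{1..<i}. c i j * (beta i m - beta j m))
         + (\<Sum>i\<in>{e<..d}. \<Sum>j\<in>{e<..<i}. c i j * (beta i m - beta j m))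
         + (\<Sum>i\<in>{e<..d}. \<Sum>j\<in>{1..e}. 3/2 * (beta i m - beta j m))
         + (\<Sum>i\<in>{1..d}. ci i * beta i m)
     = (if m \<le> e then ((\<Sum>j\<in>{0<..<m}. c m j) - (\<Sum>i\<in>{m<..e}. c i m)) - 3/2 * (real d - real e)
                 else ((\<Sum>j\<in>{e<..<m}. c m j) - (\<Sum>i\<in>{m<..d}. c i m)) + 3/2 * real e) + ci m"
proof -
  have s1: "\<And>i::nat. {1..<i} = {0<..<i}" by auto
  have s2: "{1..e} = {0<..e}" by auto
  have E1: "(\<Sum>i\<in>{1..e}. \<Sum>j\<in>{1..<i}. c i j * (beta i m - beta j m)) =
     (if m \<in> {0<..e} then (\<Sum>j\<in>{0<..<m}. c m j) - (\<Sum>i\<in>{m<..e}. c i m) else 0)"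
    unfolding s1 s2 by (rule blockconv)
  have E2: "(\<Sum>i\<in>{e<..d}. \<Sum>j\<in>{e<..<i}. c i j * (beta i m - beta j m)) =
     (if m \<in> {e<..d} then (\<Sum>j\<in>{e<..<m}. c m j) - (\<Sum>i\<in>{m<..d}. c i m) else 0)"
    by (rule blockconv)
  note E3 = crossconv[OF ed m]
  have E4: "(\<Sum>i\<in>{1..d}. ci i * beta i m) = ci m"
    using m by (simp add: beta_app if_distrib sum.delta cong: if_cong)
  show ?thesis unfolding E1 E2 E3 E4 using m by auto
qed

lemma decomp_point:
  fixes c :: "nat \<Rightarrow> nat \<Rightarrow> real" and ci \<chi> :: "nat \<Rightarrow> real"
  assumes ed: "e \<le> d"
    and eq: "eqM d \<chi> (\<lambda>m.
           (\<Sum>i\<in>{1..e}. \<Sum>j\<in>{1..<i}. c i j * (beta i m - beta j m))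
         + (\<Sum>i\<in>{e<..d}. \<Sum>j\<in>{e<..<i}. c i j * (beta i m - beta j m))
         + (\<Sum>i\<in>{e<..d}. \<Sum>j\<in>{1..e}. 3/2 * (beta i m - beta j m))
         + (\<Sum>i\<in>{1..d}. ci i * beta i m))"
    and m: "m \<in> {1..d}"
  shows "\<chi> m = (if m \<le> e then ((\<Sum>j\<in>{0<..<m}. c m j) - (\<Sum>i\<in>{m<..e}. c i m)) - 3/2 * (real d - real e)
                 else ((\<Sum>j\<in>{e<..<m}. c m j) - (\<Sum>i\<in>{m<..d}. c i m)) + 3/2 * real e) + ci m"
  using eq m rhs_point[OF ed m, of c ci] unfolding eqM_def by simp

lemma uniq_low:
  fixes c :: "nat \<Rightarrow> nat \<Rightarrow> real" and ci \<chi> :: "nat \<Rightarrow> real"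
  assumes ed: "e \<le> d"
    and cb: "\<forall>i j. 1 \<le> j \<longrightarrow> j < i \<longrightarrow> i \<le> d \<longrightarrow> 0 \<le> c i j \<and> c i j \<le> 3/2"
    and cib: "\<forall>i\<in>{1..e}. - (real a + 2) / 2 \<le> ci i \<and> ci i \<le> - real a / 2"
    and eq: "eqM d \<chi> (\<lambda>m.
           (\<Sum>i\<in>{1..e}. \<Sum>j\<in>{1..<i}. c i j * (beta i m - beta j m))
         + (\<Sum>i\<in>{e<..d}. \<Sum>j\<in>{e<..<i}. c i j * (beta i m - beta j m))
         + (\<Sum>i\<in>{e<..d}. \<Sum>j\<in>{1..e}. 3/2 * (beta i m - beta j m))
         + (\<Sum>i\<in>{1..d}. ci i * beta i m))"
    and ve: "v < e"
  shows "(\<Sum>m\<in>{v<..e}. \<chi> m) \<le> psi a d e - psi a d v"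
proof -
  define K where "K = 3/2 * (real d - real e)"
  have pt: "\<And>m. m \<in> {v<..e} \<Longrightarrow> \<chi> m = (\<Sum>j\<in>{0<..v}. c m j) + ((\<Sum>j\<in>{v<..<m}. c m j) - (\<Sum>i\<in>{m<..e}. c i m)) - K + ci m"
  proof -
    fix m assume m: "m \<in> {v<..e}"
    hence m1: "m \<in> {1..d}" using ed by auto
    have "{0<..<m} = {0<..v} \<union> {v<..<m}" using m by auto
    hence sp: "(\<Sum>j\<in>{0<..<m}. c m j) = (\<Sum>j\<in>{0<..v}. c m j) + (\<Sum>j\<in>{v<..<m}. c m j)"
      by (simp add: sum.union_disjoint[symmetric] ivl_disj_int)
    show "\<chi> m = (\<Sum>j\<in>{0<..v}. c m j) + ((\<Sum>j\<in>{v<..<m}. c m j) - (\<Sum>i\<in>{m<..e}. c i m)) - K + ci m"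
      using decomp_point[OF ed eq m1] m sp unfolding K_def by simp
  qed
  have "(\<Sum>m\<in>{v<..e}. \<chi> m) = (\<Sum>m\<in>{v<..e}. \<Sum>j\<in>{0<..v}. c m j)
      + ((\<Sum>m\<in>{v<..e}. \<Sum>j\<in>{v<..<m}. c m j) - (\<Sum>m\<in>{v<..e}. \<Sum>i\<in>{m<..e}. c i m))
      - (\<Sum>m\<in>{v<..e}. K) + (\<Sum>m\<in>{v<..e}. ci m)"
    using pt by (simp add: sum.distrib sum_subtractf)
  also have "(\<Sum>m\<in>{v<..e}. \<Sum>j\<in>{v<..<m}. c m j) = (\<Sum>m\<in>{v<..e}. \<Sum>i\<in>{m<..e}. c i m)"
    by (rule tri_swap)
  finally have S: "(\<Sum>m\<in>{v<..e}. \<chi> m) = (\<Sum>m\<in>{v<..e}. \<Sum>j\<in>{0<..v}. c m j) - (real e - real v) * K + (\<Sum>m\<in>{v<..e}. ci m)"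
    using ve by (simp add: sum_const_ivl)
  have B1: "(\<Sum>m\<in>{v<..e}. \<Sum>j\<in>{0<..v}. c m j) \<le> of_nat (card {v<..e}) * (of_nat (card {0<..v}) * (3/2))"
  proof (rule sum_bounded_above)
    fix m assume m: "m \<in> {v<..e}"
    show "(\<Sum>j\<in>{0<..v}. c m j) \<le> of_nat (card {0<..v}) * (3/2)"
    proof (intro sum_bounded_above)
      fix j assume "j \<in> {0<..v}"
      thus "c m j \<le> 3/2" using cb m ed by auto
    qed
  qed
  have B2: "(\<Sum>m\<in>{v<..e}. ci m) \<le> of_nat (card {v<..e}) * (- real a / 2)"
    by (intro sum_bounded_above) (use cib in auto)
  have "(real e - real v) * (real v * (3/2)) - (real e - real v) * K + (real e - real v) * (- real a / 2) = psi a d e - psi a d v"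
    unfolding psi_diff K_def by (simp add: field_simps)
  thus ?thesis using S B1 B2 ve by (simp add: of_nat_diff)
qed

lemma uniq_high:
  fixes c :: "nat \<Rightarrow> nat \<Rightarrow> real" and ci \<chi> :: "nat \<Rightarrow> real"
  assumes ed: "e \<le> d"
    and cb: "\<forall>i j. 1 \<le> j \<longrightarrow> j < i \<longrightarrow> i \<le> d \<longrightarrow> 0 \<le> c i j \<and> c i j \<le> 3/2"
    and cib: "\<forall>i\<in>{e<..d}. - real a / 2 < ci i \<and> ci i \<le> real a / 2"
    and eq: "eqM d \<chi> (\<lambda>m.
           (\<Sum>i\<in>{1..e}. \<Sum>j\<in>{1..<i}. c i j * (beta i m - beta j m))
         + (\<Sum>i\<in>{e<..d}. \<Sum>j\<in>{e<..<i}. c i j * (beta i m - beta j m))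
         + (\<Sum>i\<in>{e<..d}. \<Sum>j\<in>{1..e}. 3/2 * (beta i m - beta j m))
         + (\<Sum>i\<in>{1..d}. ci i * beta i m))"
    and ev: "e < v" "v \<le> d"
  shows "(\<Sum>m\<in>{e<..v}. \<chi> m) > psi a d v - psi a d e"
proof -
  define K where "K = 3/2 * real e"
  have pt: "\<And>m. m \<in> {e<..v} \<Longrightarrow> \<chi> m = ((\<Sum>j\<in>{e<..<m}. c m j) - (\<Sum>i\<in>{m<..v}. c i m)) - (\<Sum>i\<in>{v<..d}. c i m) + K + ci m"
  proof -
    fix m assume m: "m \<in> {e<..v}"
    hence m1: "m \<in> {1..d}" using ev by auto
    have sp: "(\<Sum>i\<in>{m<..d}. c i m) = (\<Sum>i\<in>{m<..v}. c i m) + (\<Sum>i\<in>{v<..d}. c i m)"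
      by (rule sum_split_ivl) (use m ev in auto)
    show "\<chi> m = ((\<Sum>j\<in>{e<..<m}. c m j) - (\<Sum>i\<in>{m<..v}. c i m)) - (\<Sum>i\<in>{v<..d}. c i m) + K + ci m"
      using decomp_point[OF ed eq m1] m sp unfolding K_def by simp
  qed
  have "(\<Sum>m\<in>{e<..v}. \<chi> m) = ((\<Sum>m\<in>{e<..v}. \<Sum>j\<in>{e<..<m}. c m j) - (\<Sum>m\<in>{e<..v}. \<Sum>i\<in>{m<..v}. c i m))
      - (\<Sum>m\<in>{e<..v}. \<Sum>i\<in>{v<..d}. c i m) + (\<Sum>m\<in>{e<..v}. K) + (\<Sum>m\<in>{e<..v}. ci m)"
    using pt by (simp add: sum.distrib sum_subtractf)
  also have "(\<Sum>m\<in>{e<..v}. \<Sum>j\<in>{e<..<m}. c m j) = (\<Sum>m\<in>{e<..v}. \<Sum>i\<in>{m<..v}. c i m)"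
    by (rule tri_swap)
  finally have S: "(\<Sum>m\<in>{e<..v}. \<chi> m) = - (\<Sum>m\<in>{e<..v}. \<Sum>i\<in>{v<..d}. c i m) + (real v - real e) * K + (\<Sum>m\<in>{e<..v}. ci m)"
    using ev by (simp add: sum_const_ivl)
  have B1: "(\<Sum>m\<in>{e<..v}. \<Sum>i\<in>{v<..d}. c i m) \<le> of_nat (card {e<..v}) * (of_nat (card {v<..d}) * (3/2))"
  proof (rule sum_bounded_above)
    fix m assume m: "m \<in> {e<..v}"
    show "(\<Sum>i\<in>{v<..d}. c i m) \<le> of_nat (card {v<..d}) * (3/2)"
    proof (intro sum_bounded_above)
      fix i assume "i \<in> {v<..d}"
      thus "c i m \<le> 3/2" using cb m by auto
    qed
  qed
  have B2: "(\<Sum>m\<in>{e<..v}. - real a / 2) < (\<Sum>m\<in>{e<..v}. ci m)"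
    by (rule sum_strict_mono) (use cib ev in auto)
  have "- ((real v - real e) * ((real d - real v) * (3/2))) + (real v - real e) * K + (real v - real e) * (- real a / 2) = psi a d v - psi a d e"
    unfolding psi_diff K_def by (simp add: field_simps)
  thus ?thesis using S B1 B2 ev by (simp add: of_nat_diff sum_const_ivl)
qed



theorem proposition3p4:
  fixes a d :: nat and \<chi> :: "nat \<Rightarrow> real"
  assumes "strictly_dominant d \<chi>"
    and "\<chi> \<in> V_a_1 a d"
  shows "\<exists>!e. e \<le> d \<and>
    (\<exists>(c :: nat \<Rightarrow> nat \<Rightarrow> real) (ci :: nat \<Rightarrow> real).
       (\<forall>i j. 1 \<le> j \<longrightarrow> j < i \<longrightarrow> i \<le> d \<longrightarrow> 0 \<le> c i j \<and> c i j \<le> 3/2) \<and>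
       (\<forall>i\<in>{1..e}. - (real a + 2) / 2 \<le> ci i \<and> ci i \<le> - real a / 2) \<and>
       (\<forall>i\<in>{e<..d}. - real a / 2 < ci i \<and> ci i \<le> real a / 2) \<and>
       eqM d \<chi> (\<lambda>m.
           (\<Sum>i\<in>{1..e}. \<Sum>j\<in>{1..<i}. c i j * (beta i m - beta j m))
         + (\<Sum>i\<in>{e<..d}. \<Sum>j\<in>{e<..<i}. c i j * (beta i m - beta j m))
         + (\<Sum>i\<in>{e<..d}. \<Sum>j\<in>{1..e}. 3/2 * (beta i m - beta j m))
         + (\<Sum>i\<in>{1..d}. ci i * beta i m)))"
  (is "\<exists>!e. ?P e")
proof (rule ex_ex1I)
  have V: "\<chi> \<in> V_a_1 a d" by fact
  have monoc: "\<And>i j. 1 \<le> i \<Longrightarrow> i \<le> j \<Longrightarrow> j \<le> d \<Longrightarrow> \<chi> i \<le> \<chi> j"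
    using assms(1) unfolding strictly_dominant_def by (metis le_less order_refl)
  define \<Phi> where "\<Phi> = (\<lambda>w. (\<Sum>m\<in>{0<..w}. \<chi> m) - psi a d w)"
  have sumPhi: "\<And>v w. v \<le> w \<Longrightarrow> (\<Sum>m\<in>{v<..w}. \<chi> m) = \<Phi> w - \<Phi> v + (psi a d w - psi a d v)"
    unfolding \<Phi>_def using sum_split_ivl[of 0] by force
  define M where "M = Min (\<Phi> ` {0..d})"
  define A where "A = {w\<in>{0..d}. \<Phi> w = M}"
  have MA: "M \<in> \<Phi> ` {0..d}" unfolding M_def by (intro Min_in) auto
  have Mle: "\<And>v. v \<le> d \<Longrightarrow> M \<le> \<Phi> v" unfolding M_def by simp
  have Ane: "A \<noteq> {}" using MA unfolding A_def by auto
  have fA: "finite A" unfolding A_def by simp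
  define e where "e = Max A"
  have eA: "e \<in> A" unfolding e_def using Ane fA by (intro Max_in)
  have ed: "e \<le> d" and eM: "\<Phi> e = M" using eA unfolding A_def by auto
  have emin: "\<And>v. v \<le> d \<Longrightarrow> \<Phi> e \<le> \<Phi> v" using Mle eM by simp
  have elast: "\<And>v. e < v \<Longrightarrow> v \<le> d \<Longrightarrow> \<Phi> e < \<Phi> v"
  proof (rule ccontr)
    fix v assume v: "e < v" "v \<le> d" "\<not> \<Phi> e < \<Phi> v"
    hence "\<Phi> v = M" using Mle eM by force
    hence "v \<in> A" using v unfolding A_def by auto
    hence "v \<le> e" unfolding e_def using fA by simp
    thus False using v by simp
  qed
  define K1 where "K1 = 3/2 * (real d - real e)"
  obtain c1 r1 where c1b: "\<forall>i j. 0 \<le> c1 i j \<and> c1 i j \<le> 3/2"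
    and r1: "\<forall>m\<in>{0<..e}. - (real a + 2) / 2 \<le> r1 m \<and> r1 m \<le> - real a / 2 \<and>
       \<chi> m + K1 = (\<Sum>j\<in>{0<..<m}. c1 m j) - (\<Sum>i\<in>{m<..e}. c1 i m) + r1 m"
  proof -
    have "\<exists>c r. (\<forall>i j. 0 \<le> c i j \<and> c i j \<le> 3/2) \<and>
     (\<forall>m\<in>{0<..e}. - (real a + 2) / 2 \<le> r m \<and> r m \<le> - real a / 2 \<and> \<chi> m + K1 = (\<Sum>j\<in>{0<..<m}. c m j) - (\<Sum>i\<in>{m<..e}. c i m) + r m)"
    proof (rule flat[where y = "\<lambda>m. \<chi> m + K1"])
      show "0 \<le> e" by simp
      show "\<And>i j. 0 < i \<Longrightarrow> i \<le> j \<Longrightarrow> j \<le> e \<Longrightarrow> \<chi> i + K1 \<le> \<chi> j + K1"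
        using monoc ed by simp
    next
      fix v assume v: "0 \<le> v" "v \<le> e"
      have s: "(\<Sum>j\<in>{v<..e}. \<chi> j + K1) = (\<Sum>j\<in>{v<..e}. \<chi> j) + (real e - real v) * K1"
        using v by (simp add: sum.distrib sum_const_ivl)
      have "(\<Sum>j\<in>{v<..e}. \<chi> j) \<le> psi a d e - psi a d v" using sumPhi[of v e] emin[of v] v ed by simp
      moreover have "psi a d e - psi a d v + (real e - real v) * K1 = 3/2*(real e - real v)*(real v - real 0) + (real e - real v)*(- real a / 2)"
        unfolding psi_diff K1_def by (simp add: field_simps)
      ultimately show "(\<Sum>j\<in>{v<..e}. \<chi> j + K1) \<le> 3/2*(real e - real v)*(real v - real 0) + (real e - real v)*(- real a / 2)"
        using s by linarith
    next
      fix v assume v: "0 \<le> v" "v \<le> e"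
      have s: "(\<Sum>j\<in>{0<..v}. \<chi> j + K1) = (\<Sum>j\<in>{0<..v}. \<chi> j) + real v * K1"
        using v by (simp add: sum.distrib)
      have "(\<Sum>j\<in>{0<..v}. \<chi> j) \<ge> - (3/2 * real v * (real d - real v)) - real v * (real a / 2 + 1)"
        using vbot[OF V, of v] v ed by simp
      moreover have "- (3/2 * real v * (real d - real v)) - real v * (real a / 2 + 1) + real v * K1
          = -(3/2*(real v - real 0)*(real e - real v)) + (real v - real 0)*(- (real a + 2) / 2)"
        unfolding K1_def by (simp add: field_simps)
      ultimately show "(\<Sum>j\<in>{0<..v}. \<chi> j + K1) \<ge> -(3/2*(real v - real 0)*(real e - real v)) + (real v - real 0)*(- (real a + 2) / 2)"
        using s by linarith
    qed
    thus ?thesis using that by blast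
  qed
  define K2 where "K2 = 3/2 * real e"
  obtain c2 r2 where c2b: "\<forall>i j. 0 \<le> c2 i j \<and> c2 i j \<le> 3/2"
    and r2: "\<forall>m\<in>{e<..d}. - real a / 2 < r2 m \<and> r2 m \<le> real a / 2 \<and>
       \<chi> m - K2 = (\<Sum>j\<in>{e<..<m}. c2 m j) - (\<Sum>i\<in>{m<..d}. c2 i m) + r2 m"
  proof -
    have "\<exists>c r. (\<forall>i j. 0 \<le> c i j \<and> c i j \<le> 3/2) \<and>
     (\<forall>m\<in>{e<..d}. - real a / 2 < r m \<and> r m \<le> real a / 2 \<and> \<chi> m - K2 = (\<Sum>j\<in>{e<..<m}. c m j) - (\<Sum>i\<in>{m<..d}. c i m) + r m)"
    proof (rule flat_strict[where y = "\<lambda>m. \<chi> m - K2"])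
      show "e \<le> d" by fact
      show "\<And>i j. e < i \<Longrightarrow> i \<le> j \<Longrightarrow> j \<le> d \<Longrightarrow> \<chi> i - K2 \<le> \<chi> j - K2"
        using monoc by simp
    next
      fix v assume v: "e \<le> v" "v \<le> d"
      have s: "(\<Sum>j\<in>{v<..d}. \<chi> j - K2) = (\<Sum>j\<in>{v<..d}. \<chi> j) - (real d - real v) * K2"
        using v by (simp add: sum_subtractf sum_const_ivl)
      have "(\<Sum>j\<in>{v<..d}. \<chi> j) \<le> 3/2 * (real d - real v) * real v + (real d - real v) * (real a / 2)"
        using vtop[OF V, of v] v by simp
      moreover have "3/2 * (real d - real v) * real v + (real d - real v) * (real a / 2) - (real d - real v) * K2
           = 3/2*(real d - real v)*(real v - real e) + (real d - real v)*(real a / 2)"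
        unfolding K2_def by (simp add: field_simps)
      ultimately show "(\<Sum>j\<in>{v<..d}. \<chi> j - K2) \<le> 3/2*(real d - real v)*(real v - real e) + (real d - real v)*(real a / 2)"
        using s by linarith
    next
      fix v assume v: "e < v" "v \<le> d"
      have s: "(\<Sum>j\<in>{e<..v}. \<chi> j - K2) = (\<Sum>j\<in>{e<..v}. \<chi> j) - (real v - real e) * K2"
        using v by (simp add: sum_subtractf sum_const_ivl)
      have "(\<Sum>j\<in>{e<..v}. \<chi> j) > psi a d v - psi a d e" using sumPhi[of e v] elast[of v] v by simp
      moreover have "psi a d v - psi a d e - (real v - real e) * K2
          = -(3/2*(real v - real e)*(real d - real v)) + (real v - real e)*(- real a / 2)"
        unfolding psi_diff K2_def by (simp add: field_simps)
      ultimately show "(\<Sum>j\<in>{e<..v}. \<chi> j - K2) > -(3/2*(real v - real e)*(real d - real v)) + (real v - real e)*(- real a / 2)"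
        using s by linarith
    qed
    thus ?thesis using that by blast
  qed
  define c where "c = (\<lambda>i j. if i \<le> e then c1 i j else if j \<le> e then 0 else c2 i j)"
  define ci where "ci = (\<lambda>m. if m \<le> e then r1 m else r2 m)"
  show "\<exists>e. ?P e"
  proof (intro exI[of _ e] conjI exI[of _ c] exI[of _ ci])
    show "e \<le> d" by fact
    show "\<forall>i j. 1 \<le> j \<longrightarrow> j < i \<longrightarrow> i \<le> d \<longrightarrow> 0 \<le> c i j \<and> c i j \<le> 3/2"
      unfolding c_def using c1b c2b by auto
    show "\<forall>i\<in>{1..e}. - (real a + 2) / 2 \<le> ci i \<and> ci i \<le> - real a / 2"
      unfolding ci_def using r1 by auto
    show "\<forall>i\<in>{e<..d}. - real a / 2 < ci i \<and> ci i \<le> real a / 2"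
      unfolding ci_def using r2 by auto
    show "eqM d \<chi> (\<lambda>m.
           (\<Sum>i\<in>{1..e}. \<Sum>j\<in>{1..<i}. c i j * (beta i m - beta j m))
         + (\<Sum>i\<in>{e<..d}. \<Sum>j\<in>{e<..<i}. c i j * (beta i m - beta j m))
         + (\<Sum>i\<in>{e<..d}. \<Sum>j\<in>{1..e}. 3/2 * (beta i m - beta j m))
         + (\<Sum>i\<in>{1..d}. ci i * beta i m))"
      unfolding eqM_def
    proof
      fix m assume m: "m \<in> {1..d}"
      note R = rhs_point[OF ed m, of c ci]
        have X: "\<chi> m = (if m \<le> e then ((\<Sum>j\<in>{0<..<m}. c m j) - (\<Sum>i\<in>{m<..e}. c i m)) - 3/2 * (real d - real e)
                 else ((\<Sum>j\<in>{e<..<m}. c m j) - (\<Sum>i\<in>{m<..d}. c i m)) + 3/2 * real e) + ci m"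
        proof (cases "m \<le> e")
          case True
          have a1: "(\<Sum>j\<in>{0<..<m}. c m j) = (\<Sum>j\<in>{0<..<m}. c1 m j)" unfolding c_def using True by simp
          have a2: "(\<Sum>i\<in>{m<..e}. c i m) = (\<Sum>i\<in>{m<..e}. c1 i m)" unfolding c_def by (intro sum.cong) auto
          have "\<chi> m + K1 = (\<Sum>j\<in>{0<..<m}. c1 m j) - (\<Sum>i\<in>{m<..e}. c1 i m) + r1 m" using r1 m True by auto
          thus ?thesis using True a1 a2 unfolding ci_def K1_def by simp
        next
          case False
          have a1: "(\<Sum>j\<in>{e<..<m}. c m j) = (\<Sum>j\<in>{e<..<m}. c2 m j)" unfolding c_def using False by (intro sum.cong) auto
          have a2: "(\<Sum>i\<in>{m<..d}. c i m) = (\<Sum>i\<in>{m<..d}. c2 i m)" unfolding c_def using False by (intro sum.cong) auto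
          have "\<chi> m - K2 = (\<Sum>j\<in>{e<..<m}. c2 m j) - (\<Sum>i\<in>{m<..d}. c2 i m) + r2 m" using r2 m False by auto
          thus ?thesis using False a1 a2 unfolding ci_def K2_def by simp
        qed
      show "\<chi> m = (\<Sum>i\<in>{1..e}. \<Sum>j\<in>{1..<i}. c i j * (beta i m - beta j m))
         + (\<Sum>i\<in>{e<..d}. \<Sum>j\<in>{e<..<i}. c i j * (beta i m - beta j m))
         + (\<Sum>i\<in>{e<..d}. \<Sum>j\<in>{1..e}. 3/2 * (beta i m - beta j m))
         + (\<Sum>i\<in>{1..d}. ci i * beta i m)"
        by (subst R) (rule X)
    qed
  qed
next
  fix e1 e2 assume P1: "?P e1" and P2: "?P e2"
  show "e1 = e2"
  proof (rule ccontr)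
    assume ne: "e1 \<noteq> e2"
    have key: "\<And>x y. ?P x \<Longrightarrow> ?P y \<Longrightarrow> x < y \<Longrightarrow> False"
    proof -
      fix x y assume Px: "?P x" and Py: "?P y" and xy: "x < y"
      obtain cx cix where x1: "x \<le> d" and x2: "\<forall>i j. 1 \<le> j \<longrightarrow> j < i \<longrightarrow> i \<le> d \<longrightarrow> 0 \<le> cx i j \<and> cx i j \<le> 3/2"
        and x4: "\<forall>i\<in>{x<..d}. - real a / 2 < cix i \<and> cix i \<le> real a / 2"
        and x5: "eqM d \<chi> (\<lambda>m.
           (\<Sum>i\<in>{1..x}. \<Sum>j\<in>{1..<i}. cx i j * (beta i m - beta j m))
         + (\<Sum>i\<in>{x<..d}. \<Sum>j\<in>{x<..<i}. cx i j * (beta i m - beta j m))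
         + (\<Sum>i\<in>{x<..d}. \<Sum>j\<in>{1..x}. 3/2 * (beta i m - beta j m))
         + (\<Sum>i\<in>{1..d}. cix i * beta i m))" using Px by blast
      obtain cy ciy where y1: "y \<le> d" and y2: "\<forall>i j. 1 \<le> j \<longrightarrow> j < i \<longrightarrow> i \<le> d \<longrightarrow> 0 \<le> cy i j \<and> cy i j \<le> 3/2"
        and y3: "\<forall>i\<in>{1..y}. - (real a + 2) / 2 \<le> ciy i \<and> ciy i \<le> - real a / 2"
        and y5: "eqM d \<chi> (\<lambda>m.
           (\<Sum>i\<in>{1..y}. \<Sum>j\<in>{1..<i}. cy i j * (beta i m - beta j m))
         + (\<Sum>i\<in>{y<..d}. \<Sum>j\<in>{y<..<i}. cy i j * (beta i m - beta j m))
         + (\<Sum>i\<in>{y<..d}. \<Sum>j\<in>{1..y}. 3/2 * (beta i m - beta j m))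
         + (\<Sum>i\<in>{1..d}. ciy i * beta i m))" using Py by blast
      have "(\<Sum>m\<in>{x<..y}. \<chi> m) > psi a d y - psi a d x"
        by (rule uniq_high[OF x1 x2 x4 x5 xy y1])
      moreover have "(\<Sum>m\<in>{x<..y}. \<chi> m) \<le> psi a d y - psi a d x"
        by (rule uniq_low[OF y1 y2 y3 y5 xy])
      ultimately show False by linarith
    qed
    have "e1 < e2 \<or> e2 < e1" using ne by arith
    thus False using key P1 P2 by blast
  qed
qed

end
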